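(* There exist $\varepsilon_0>0$ and $n_0$ such that for every $\varepsilon\in(0,\varepsilon_0]$ and $n\ge n_0$ the following holds. Let $G$ be an $\varepsilon$-superextremal two-clique on $n$ vertices with partition $V(G)=A\uplus B$, and let $f,f'$ be two vertex-disjoint edges of $G$ each having one endpoint in $A$ and one in $B$. Then $G$ has a Hamilton cycle containing $f$ and $f'$.
   Context: For $X\subseteq V(G)$, $d(v,X)$ is the number of neighbours of $v$ in $X$. A graph $G$ on $n$ vertices is an $\varepsilon$-superextremal two-clique (with partition $A\uplus B$) if: (A1) $||A|-|B||\le\varepsilon n$; (A2) $d(a,A)\ge(1/2-\varepsilon)n$ for all but at most $\varepsilon n$ vertices $a\in A$; (A3) $d(a,A)\ge(1/4-\varepsilon)n$ for all $a\in A$; (A4) $d(b,B)\ge(1/2-\varepsilon)n$ for all but at most $\varepsilon n$ vertices $b\in B$; (A5) $d(b,B)\ge(1/4-\varepsilon)n$ for all $b\in B$. *)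

theory Defs
  imports Main "HOL-Library.Disjoint_Sets" Complex_Main
begin

definition simple_graph :: "'a set \<Rightarrow> ('a \<Rightarrow> 'a \<Rightarrow> bool) \<Rightarrow> bool" where
  "simple_graph V E \<longleftrightarrow> finite V \<and> (\<forall>x y. E x y \<longrightarrow> x \<in> V \<and> y \<in> V)
     \<and> (\<forall>x y. E x y \<longrightarrow> E y x) \<and> (\<forall>x. \<not> E x x)"

definition deg_in :: "('a \<Rightarrow> 'a \<Rightarrow> bool) \<Rightarrow> 'a \<Rightarrow> 'a set \<Rightarrow> nat" where
  "deg_in E v X = card {x \<in> X. E v x}"

definition superextremal_two_clique ::
  "real \<Rightarrow> 'a set \<Rightarrow> ('a \<Rightarrow> 'a \<Rightarrow> bool) \<Rightarrow> 'a set \<Rightarrow> 'a set \<Rightarrow> bool" where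
  "superextremal_two_clique \<epsilon> V E A B \<longleftrightarrow>
     (let n = real (card V) in
       A \<union> B = V \<and> A \<inter> B = {} \<and>
       \<bar>real (card A) - real (card B)\<bar> \<le> \<epsilon> * n \<and>
       real (card {a \<in> A. real (deg_in E a A) < (1/2 - \<epsilon>) * n}) \<le> \<epsilon> * n \<and>
       (\<forall>a \<in> A. real (deg_in E a A) \<ge> (1/4 - \<epsilon>) * n) \<and>
       real (card {b \<in> B. real (deg_in E b B) < (1/2 - \<epsilon>) * n}) \<le> \<epsilon> * n \<and>
       (\<forall>b \<in> B. real (deg_in E b B) \<ge> (1/4 - \<epsilon>) * n))"

definition hamilton_cycle :: "'a set \<Rightarrow> ('a \<Rightarrow> 'a \<Rightarrow> bool) \<Rightarrow> 'a list \<Rightarrow> bool" where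
  "hamilton_cycle V E cs \<longleftrightarrow> distinct cs \<and> set cs = V \<and> length cs \<ge> 3 \<and>
     (\<forall>i < length cs. E (cs ! i) (cs ! ((i + 1) mod length cs)))"

definition cycle_contains_edge :: "'a list \<Rightarrow> 'a \<Rightarrow> 'a \<Rightarrow> bool" where
  "cycle_contains_edge cs u v \<longleftrightarrow>
     (\<exists>i < length cs. {cs ! i, cs ! ((i + 1) mod length cs)} = {u, v})"

end

theory Submission
  imports Defs
begin


fun ispath :: "('a \<Rightarrow> 'a \<Rightarrow> bool) \<Rightarrow> 'a list \<Rightarrow> bool" where
  "ispath E [] = True"
| "ispath E [v] = True"
| "ispath E (u # v # r) = (E u v \<and> ispath E (v # r))"

lemma ispath_Cons: "ispath E (v # r) \<longleftrightarrow> (r = [] \<or> E v (hd r)) \<and> ispath E r"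
  by (cases r) auto

lemma ispath_append:
  "ispath E (xs @ ys) \<longleftrightarrow> ispath E xs \<and> ispath E ys \<and> (xs \<noteq> [] \<and> ys \<noteq> [] \<longrightarrow> E (last xs) (hd ys))"
proof (induction xs)
  case Nil then show ?case by simp
next
  case (Cons x xs)
  show ?case
  proof (cases xs)
    case Nil then show ?thesis by (auto simp: ispath_Cons)
  next
    case (Cons y zs)
    then show ?thesis using Cons.IH by (auto simp: ispath_Cons)
  qed
qed

lemma ispath_nth: "ispath E p \<Longrightarrow> Suc i < length p \<Longrightarrow> E (p ! i) (p ! Suc i)"
proof (induction p arbitrary: i)
  case (Cons x xs)
  show ?case
  proof (cases i)
    case 0 then show ?thesis using Cons.prems by (auto simp: ispath_Cons hd_conv_nth)
  next
    case (Suc j) then show ?thesis using Cons by (auto simp: ispath_Cons)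
  qed
qed simp

lemma pick_core:
  assumes "finite B" "finite C" "finite U" "card B + card C + card U < card A"
  shows "\<exists>h\<in>A. h \<notin> B \<and> h \<notin> C \<and> h \<notin> U"
proof (rule ccontr)
  assume "\<not> ?thesis"
  then have "A \<subseteq> B \<union> C \<union> U" by blast
  then have "card A \<le> card (B \<union> C \<union> U)" using assms by (intro card_mono) auto
  also have "\<dots> \<le> card (B \<union> C) + card U" by (rule card_Un_le)
  also have "\<dots> \<le> card B + card C + card U" using card_Un_le[of B C] by simp
  finally show False using assms by simp
qed

lemma insert_one:
  assumes sym: "\<And>u v. E u v \<Longrightarrow> E v u"
    and p: "ispath E p" "distinct p" "z \<notin> set p"
    and bd: "real (card {u \<in> set p. \<not> E z u}) \<le> K"
    and len: "2 * K < real (length p) - 1"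
  shows "\<exists>p'. ispath E p' \<and> distinct p' \<and> set p' = insert z (set p) \<and> hd p' = hd p
     \<and> last p' = last p \<and> length p' = Suc (length p)"
proof -
  define Bd where "Bd = {u \<in> set p. \<not> E z u}"
  have "\<exists>i. Suc i < length p \<and> E z (p ! i) \<and> E z (p ! Suc i)"
  proof (rule ccontr)
    assume na: "\<not> ?thesis"
    define I1 where "I1 = {i. i < length p \<and> p ! i \<in> Bd}"
    define I2 where "I2 = {i. Suc i < length p \<and> p ! Suc i \<in> Bd}"
    have sub: "{..<length p - 1} \<subseteq> I1 \<union> I2"
    proof
      fix i assume "i \<in> {..<length p - 1}"
      then have i: "Suc i < length p" by auto
      then show "i \<in> I1 \<union> I2" using na unfolding I1_def I2_def Bd_def
        by (auto simp: less_imp_le)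
    qed
    have fB: "finite Bd" unfolding Bd_def by auto
    have c1: "card I1 \<le> card Bd"
    proof (rule card_inj_on_le[of "nth p"])
      show "inj_on (nth p) I1" unfolding I1_def inj_on_def
        using p(2) nth_eq_iff_index_eq by blast
      show "nth p ` I1 \<subseteq> Bd" unfolding I1_def by auto
    qed (rule fB)
    have c2: "card I2 \<le> card Bd"
    proof (rule card_inj_on_le[of "\<lambda>i. p ! Suc i"])
      show "inj_on (\<lambda>i. p ! Suc i) I2" unfolding I2_def inj_on_def
        using p(2) nth_eq_iff_index_eq by fastforce
      show "(\<lambda>i. p ! Suc i) ` I2 \<subseteq> Bd" unfolding I2_def by auto
    qed (rule fB)
    have "finite I1" unfolding I1_def by auto
    have "finite I2" unfolding I2_def by (rule finite_subset[of _ "{..<length p}"]) auto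
    have "finite (I1 \<union> I2)" using \<open>finite I1\<close> \<open>finite I2\<close> by simp
    then have "length p - 1 \<le> card (I1 \<union> I2)"
      using card_mono[OF _ sub] by simp
    also have "\<dots> \<le> card I1 + card I2" by (rule card_Un_le)
    finally have "length p - 1 \<le> 2 * card Bd" using c1 c2 by linarith
    then have "real (length p) - 1 \<le> 2 * real (card Bd)" by linarith
    then show False using bd len unfolding Bd_def by linarith
  qed
  then obtain i where i: "Suc i < length p" "E z (p ! i)" "E z (p ! Suc i)" by blast
  define p' where "p' = take (Suc i) p @ z # drop (Suc i) p"
  have tne: "take (Suc i) p \<noteq> []" using i by (cases p) auto
  have dne: "drop (Suc i) p \<noteq> []" using i by simp
  have lt: "last (take (Suc i) p) = p ! i" using i tne by (simp add: last_conv_nth min_def)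
  have hd: "hd (drop (Suc i) p) = p ! Suc i" using i by (simp add: hd_drop_conv_nth)
  have pp: "ispath E (take (Suc i) p @ drop (Suc i) p)" using p by simp
  then have "ispath E (take (Suc i) p)" "ispath E (drop (Suc i) p)"
    unfolding ispath_append by auto
  then have "ispath E p'" unfolding p'_def ispath_append using tne dne lt hd i sym
    by (auto simp: ispath_Cons)
  moreover have "distinct p'"
  proof -
    have d: "distinct (take (Suc i) p)" "distinct (drop (Suc i) p)"
      "set (take (Suc i) p) \<inter> set (drop (Suc i) p) = {}"
      using p(2) by (metis append_take_drop_id distinct_append)+
    then show ?thesis unfolding p'_def using p(3)
      by (auto dest: in_set_takeD in_set_dropD)
  qed
  moreover have "set p' = insert z (set p)"
  proof -
    have "set p = set (take (Suc i) p) \<union> set (drop (Suc i) p)"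
      by (metis append_take_drop_id set_append)
    then show ?thesis unfolding p'_def by auto
  qed
  moreover have "hd p' = hd p" unfolding p'_def using tne by (simp add: hd_append)
  moreover have "last p' = last p" unfolding p'_def using dne i by simp
  moreover have "length p' = Suc (length p)" unfolding p'_def using i by simp
  ultimately show ?thesis by blast
qed

lemma insert_all:
  assumes sym: "\<And>u v. E u v \<Longrightarrow> E v u"
  shows "finite S \<Longrightarrow> \<forall>p. ispath E p \<and> distinct p \<and> set p \<inter> S = {} \<and> set p \<subseteq> X \<and> finite X
      \<and> 2 * K < real (length p) - 1 \<and> S \<subseteq> X \<and> (\<forall>z\<in>S. real (card {u \<in> X. \<not> E z u}) \<le> K)
    \<longrightarrow> (\<exists>p'. ispath E p' \<and> distinct p' \<and> set p' = set p \<union> S \<and> hd p' = hd p \<and> last p' = last p)"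
proof (induction S rule: finite_induct)
  case empty then show ?case by blast
next
  case (insert z S)
  show ?case
  proof (intro allI impI)
    fix p assume H: "ispath E p \<and> distinct p \<and> set p \<inter> insert z S = {} \<and> set p \<subseteq> X \<and> finite X
      \<and> 2 * K < real (length p) - 1 \<and> insert z S \<subseteq> X \<and> (\<forall>z\<in>insert z S. real (card {u \<in> X. \<not> E z u}) \<le> K)"
    have "card {u \<in> set p. \<not> E z u} \<le> card {u \<in> X. \<not> E z u}"
      using H by (intro card_mono) auto
    then have bd: "real (card {u \<in> set p. \<not> E z u}) \<le> K" using H by force
    obtain p1 where p1: "ispath E p1" "distinct p1" "set p1 = insert z (set p)" "hd p1 = hd p"
      "last p1 = last p" "length p1 = Suc (length p)"
      using insert_one[of E p z K, OF sym] H bd by auto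
    have "\<exists>p'. ispath E p' \<and> distinct p' \<and> set p' = set p1 \<union> S \<and> hd p' = hd p1 \<and> last p' = last p1"
      using insert.IH H p1 insert.hyps by (intro insert.IH[rule_format]) auto
    then show "\<exists>p'. ispath E p' \<and> distinct p' \<and> set p' = set p \<union> insert z S \<and> hd p' = hd p \<and> last p' = last p"
      using p1 by auto
  qed
qed




locale side =
  fixes E :: "'a \<Rightarrow> 'a \<Rightarrow> bool" and X L :: "'a set" and D K Lam :: real and x y :: 'a
  assumes sym: "\<And>u v. E u v \<Longrightarrow> E v u"
    and finX: "finite X" and LX: "L \<subseteq> X" and cardL: "real (card L) \<le> Lam"
    and degD: "\<And>v. v \<in> X \<Longrightarrow> D \<le> real (card {u \<in> X. E v u})"
    and nonK: "\<And>v. v \<in> X - L \<Longrightarrow> real (card {u \<in> X. \<not> E v u}) \<le> K"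
    and Kpos: "0 \<le> K"
    and numer: "3 * K + 4 * Lam + 20 < D"
    and xX: "x \<in> X" and yX: "y \<in> X" and xy: "x \<noteq> y"
begin

lemma finL: "finite L" using LX finX finite_subset by blast

lemma pick2:
  assumes "e \<in> X - L" "w \<in> X" "finite U" "real (card U) + K + Lam < D"
  shows "\<exists>h\<in>X - L. h \<notin> U \<and> E e h \<and> E w h"
proof -
  have "card {u \<in> X. \<not> E e u} + card L + card U < card {u \<in> X. E w u}"
    using nonK[OF assms(1)] degD[OF assms(2)] cardL assms(4) by linarith
  then obtain h where "h \<in> {u \<in> X. E w u}" "h \<notin> {u \<in> X. \<not> E e u}" "h \<notin> L" "h \<notin> U"
    using pick_core[of "{u \<in> X. \<not> E e u}" L U "{u \<in> X. E w u}"] finX finL assms(3) by auto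
  then show ?thesis by auto
qed

lemma pick1:
  assumes "w \<in> X" "finite U" "real (card U) + Lam < D"
  shows "\<exists>h\<in>X - L. h \<notin> U \<and> E w h"
proof -
  have "card ({}::'a set) + card L + card U < card {u \<in> X. E w u}"
    using degD[OF assms(1)] cardL assms(3) by simp
  then obtain h where "h \<in> {u \<in> X. E w u}" "h \<notin> L" "h \<notin> U"
    using pick_core[of "{}" L U "{u \<in> X. E w u}"] finL assms(2) by auto
  then show ?thesis by auto
qed

definition inv :: "'a list \<Rightarrow> bool" where
  "inv r \<longleftrightarrow> ispath E r \<and> distinct r \<and> r \<noteq> [] \<and> hd r \<in> X - L \<and> set r \<subseteq> X \<and> x \<notin> set r"

lemma card_ins2: "real (card (insert a (set r))) \<le> real (length r) + 1"
proof -
  have "card (insert a (set r)) \<le> Suc (card (set r))" by (simp add: card_insert_le_m1)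
  moreover have "card (set r) \<le> length r" by (rule card_length)
  ultimately show ?thesis by linarith
qed

lemma card_ins3: "real (card (insert b (insert a (set r)))) \<le> real (length r) + 2"
proof -
  have "card (insert b (insert a (set r))) \<le> Suc (card (insert a (set r)))" by (simp add: card_insert_le_m1)
  then show ?thesis using card_ins2[of a r] by linarith
qed

lemma lows:
  "finite T \<Longrightarrow> T \<subseteq> L \<Longrightarrow> \<forall>r. inv r \<and> set r \<inter> T = {} \<and> x \<notin> T
     \<and> real (length r) + 3 * real (card T) + 2 + K + Lam < D \<longrightarrow>
    (\<exists>r'. inv r' \<and> last r' = last r \<and> set r \<union> T \<subseteq> set r' \<and> length r' \<le> length r + 3 * card T)"
proof (induction T rule: finite_induct)
  case empty then show ?case by auto
next
  case (insert l T)
  show ?case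
  proof (intro allI impI)
    fix r assume H: "inv r \<and> set r \<inter> insert l T = {} \<and> x \<notin> insert l T
     \<and> real (length r) + 3 * real (card (insert l T)) + 2 + K + Lam < D"
    have ct: "card (insert l T) = Suc (card T)" using insert.hyps by simp
    have lX: "l \<in> X" "l \<in> L" using insert.prems LX by auto
    obtain h1 where h1: "h1 \<in> X - L" "h1 \<notin> insert x (set r)" "E (hd r) h1" "E l h1"
      using pick2[of "hd r" l "insert x (set r)"] H lX card_ins2[of x r] ct unfolding inv_def
      by auto
    obtain h2 where h2: "h2 \<in> X - L" "h2 \<notin> insert h1 (insert x (set r))" "E l h2"
    proof -
      have "real (card (insert h1 (insert x (set r)))) + Lam < D"
        using H card_ins3[of h1 x r] ct Kpos by simp
      then show ?thesis using that pick1[of l "insert h1 (insert x (set r))"] lX by auto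
    qed
    define r1 where "r1 = h2 # l # h1 # r"
    have "inv r1" unfolding r1_def inv_def using H h1 h2 lX sym unfolding inv_def
      by (auto simp: ispath_Cons)
    moreover have "set r1 \<inter> T = {}" using H h1 h2 insert.hyps insert.prems unfolding r1_def by auto
    moreover have "real (length r1) + 3 * real (card T) + 2 + K + Lam < D"
      using H ct unfolding r1_def by simp
    ultimately obtain r' where r': "inv r'" "last r' = last r1" "set r1 \<union> T \<subseteq> set r'"
       "length r' \<le> length r1 + 3 * card T"
      using insert.IH insert.prems H by blast
    have "last r1 = last r" using H unfolding r1_def inv_def by simp
    then show "\<exists>r'. inv r' \<and> last r' = last r \<and> set r \<union> insert l T \<subseteq> set r' \<and> length r' \<le> length r + 3 * card (insert l T)"
      using r' ct unfolding r1_def by (intro exI[of _ r']) auto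
  qed
qed

lemma pad:
  "\<forall>r. inv r \<and> real (length r) + real j + 1 + K + Lam < D \<longrightarrow>
    (\<exists>r'. inv r' \<and> last r' = last r \<and> set r \<subseteq> set r' \<and> length r' = length r + j)"
proof (induction j)
  case 0 then show ?case by auto
next
  case (Suc j)
  show ?case
  proof (intro allI impI)
    fix r assume H: "inv r \<and> real (length r) + real (Suc j) + 1 + K + Lam < D"
    obtain h where h: "h \<in> X - L" "h \<notin> insert x (set r)" "E (hd r) h"
      using pick2[of "hd r" "hd r" "insert x (set r)"] H card_ins2[of x r] unfolding inv_def
      by auto
    define r1 where "r1 = h # r"
    have "inv r1" using H h sym unfolding r1_def inv_def by (auto simp: ispath_Cons)
    moreover have "real (length r1) + real j + 1 + K + Lam < D" using H unfolding r1_def by simp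
    ultimately obtain r' where r': "inv r'" "last r' = last r1" "set r1 \<subseteq> set r'"
       "length r' = length r1 + j" using Suc.IH by blast
    then show "\<exists>r'. inv r' \<and> last r' = last r \<and> set r \<subseteq> set r' \<and> length r' = length r + Suc j"
      using H unfolding r1_def inv_def by (intro exI[of _ r']) auto
  qed
qed

end



context side begin

theorem ham_path: "\<exists>p. ispath E p \<and> distinct p \<and> set p = X \<and> hd p = x \<and> last p = y"
proof -
  have Lpos: "0 \<le> Lam" using cardL by (meson of_nat_0_le_iff order_trans)
  have "real (card {x, y}) \<le> 2" by (simp add: card_insert_le_m1)
  then obtain h0 where h0: "h0 \<in> X - L" "h0 \<notin> {x, y}" "E y h0"
    using pick1[of y "{x,y}"] yX numer Kpos Lpos by auto
  define r0 where "r0 = [h0, y]"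
  have i0: "inv r0" unfolding inv_def r0_def using h0 sym yX xy by auto
  define T where "T = L - {x, y}"
  have fT: "finite T" "T \<subseteq> L" unfolding T_def using finL by auto
  have cT: "real (card T) \<le> Lam" using card_mono[OF finL, of T] fT cardL by linarith
  obtain r1 where r1: "inv r1" "last r1 = last r0" "set r0 \<union> T \<subseteq> set r1"
      "length r1 \<le> length r0 + 3 * card T"
  proof -
    have "set r0 \<inter> T = {}" "x \<notin> T" using h0 unfolding r0_def T_def by auto
    moreover have "real (length r0) + 3 * real (card T) + 2 + K + Lam < D"
      using cT numer Kpos unfolding r0_def by simp
    ultimately show ?thesis using that lows[OF fT] i0 by blast
  qed
  have "real (length r1) \<le> real (length r0 + 3 * card T)" using r1(4) by linarith
  then have lr1: "real (length r1) \<le> 2 + 3 * Lam" using cT unfolding r0_def by simp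
  define j where "j = nat \<lceil>2 * K\<rceil> + 3"
  have jb: "real j \<le> 2 * K + 4" "2 * K + 3 \<le> real j" unfolding j_def using Kpos by linarith+
  obtain r2 where r2: "inv r2" "last r2 = last r1" "set r1 \<subseteq> set r2" "length r2 = length r1 + j"
    using pad[of j] r1(1) lr1 jb numer Kpos Lpos by fastforce
  obtain hx where hx: "hx \<in> X - L" "hx \<notin> insert x (set r2)" "E x hx"
  proof -
    have "real (card (insert x (set r2))) + Lam < D"
      using card_ins2[of x r2] r2(4) lr1 jb numer Kpos Lpos by simp
    then show ?thesis using that pick1[of x "insert x (set r2)"] xX by auto
  qed
  obtain h where h: "h \<in> X - L" "h \<notin> insert hx (insert x (set r2))" "E (hd r2) h" "E hx h"
  proof -
    have "real (card (insert hx (insert x (set r2)))) + K + Lam < D"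
      using card_ins3[of hx x r2] r2(4) lr1 jb numer Kpos Lpos by simp
    then show ?thesis using that pick2[of "hd r2" hx "insert hx (insert x (set r2))"] r2(1) hx(1)
      unfolding inv_def by auto
  qed
  define r3 where "r3 = x # hx # h # r2"
  have p3: "ispath E r3" "distinct r3" using r2(1) hx h sym unfolding r3_def inv_def
    by (auto simp: ispath_Cons)
  have s3: "set r3 \<subseteq> X" using r2(1) hx h xX unfolding r3_def inv_def by auto
  have hd3: "hd r3 = x" unfolding r3_def by simp
  have last3: "last r3 = y" using r2 r1 unfolding r3_def r0_def inv_def by simp
  have L3: "L \<subseteq> set r3"
  proof -
    have "y \<in> set r3" "T \<subseteq> set r3" using r1(3) r2(3) unfolding r3_def r0_def by auto
    then show ?thesis unfolding T_def r3_def by auto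
  qed
  have len3: "2 * K < real (length r3) - 1" using r2(4) jb unfolding r3_def by simp
  define S where "S = X - set r3"
  have "finite S" unfolding S_def using finX by simp
  then obtain p where p: "ispath E p" "distinct p" "set p = set r3 \<union> S" "hd p = hd r3" "last p = last r3"
  proof -
    have "\<forall>z\<in>S. real (card {u \<in> X. \<not> E z u}) \<le> K" using nonK L3 unfolding S_def by blast
    moreover have "set r3 \<inter> S = {}" "S \<subseteq> X" unfolding S_def by auto
    ultimately show ?thesis using that insert_all[of E S X K, OF sym \<open>finite S\<close>] p3 s3 len3 finX
      by blast
  qed
  show ?thesis using p s3 hd3 last3 unfolding S_def by (intro exI[of _ p]) auto
qed

end



lemma card_split: "finite A \<Longrightarrow> card {u \<in> A. P u} + card {u \<in> A. \<not> P u} = card A"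
proof -
  assume f: "finite A"
  have "A = {u \<in> A. P u} \<union> {u \<in> A. \<not> P u}" by auto
  then have "card A = card ({u \<in> A. P u} \<union> {u \<in> A. \<not> P u})" by simp
  also have "\<dots> = card {u \<in> A. P u} + card {u \<in> A. \<not> P u}"
    using f by (intro card_Un_disjoint) auto
  finally show ?thesis by simp
qed

lemma side_path:
  fixes E :: "'a \<Rightarrow> 'a \<Rightarrow> bool" and X :: "'a set" and \<epsilon> :: real and n :: nat
  assumes sym: "\<And>u v. E u v \<Longrightarrow> E v u" and finX: "finite X"
    and eps: "0 < \<epsilon>" "\<epsilon> \<le> 1/100" and nbig: "1000 \<le> n"
    and cX: "real (card X) \<le> (real n + \<epsilon> * real n) / 2"
    and low: "real (card {a \<in> X. real (deg_in E a X) < (1/2 - \<epsilon>) * real n}) \<le> \<epsilon> * real n"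
    and mind: "\<forall>a\<in>X. real (deg_in E a X) \<ge> (1/4 - \<epsilon>) * real n"
    and xy: "x \<in> X" "y \<in> X" "x \<noteq> y"
  shows "\<exists>p. ispath E p \<and> distinct p \<and> set p = X \<and> hd p = x \<and> last p = y"
proof -
  define L where "L = {a \<in> X. real (deg_in E a X) < (1/2 - \<epsilon>) * real n}"
  have "\<epsilon> * real n \<le> (1/100) * real n" using eps by (intro mult_right_mono) auto
  then have en: "\<epsilon> * real n \<le> real n / 100" by simp
  have en0: "0 \<le> \<epsilon> * real n" using eps by simp
  interpret side E X L "(1/4 - \<epsilon>) * real n" "3/2 * \<epsilon> * real n" "\<epsilon> * real n" x y
  proof
    show "\<And>u v. E u v \<Longrightarrow> E v u" by (rule sym)
    show "finite X" by (rule finX)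
    show "L \<subseteq> X" unfolding L_def by auto
    show "real (card L) \<le> \<epsilon> * real n" using low unfolding L_def .
    show "\<And>v. v \<in> X \<Longrightarrow> (1/4 - \<epsilon>) * real n \<le> real (card {u \<in> X. E v u})"
      using mind unfolding deg_in_def by auto
    show "\<And>v. v \<in> X - L \<Longrightarrow> real (card {u \<in> X. \<not> E v u}) \<le> 3/2 * \<epsilon> * real n"
    proof -
      fix v assume v: "v \<in> X - L"
      then have d: "real (card {u \<in> X. E v u}) \<ge> (1/2 - \<epsilon>) * real n"
        unfolding L_def deg_in_def by auto
      have "card {u \<in> X. E v u} + card {u \<in> X. \<not> E v u} = card X" using card_split[OF finX] .
      then have "real (card {u \<in> X. E v u}) + real (card {u \<in> X. \<not> E v u}) = real (card X)"
        by (metis of_nat_add)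
      then show "real (card {u \<in> X. \<not> E v u}) \<le> 3/2 * \<epsilon> * real n"
        using d cX by (simp add: algebra_simps)
    qed
    show "0 \<le> 3/2 * \<epsilon> * real n" using en0 by simp
    show "3 * (3/2 * \<epsilon> * real n) + 4 * (\<epsilon> * real n) + 20 < (1/4 - \<epsilon>) * real n"
    proof -
      have nb: "(1000::real) \<le> real n" using nbig by simp
      have e1: "3 * (3/2 * \<epsilon> * real n) + 4 * (\<epsilon> * real n) + 20 = 17/2 * (\<epsilon> * real n) + 20" by simp
      have e2: "(1/4 - \<epsilon>) * real n = real n / 4 - \<epsilon> * real n" by (simp add: algebra_simps)
      show ?thesis unfolding e1 e2 using en nb by linarith
    qed
  qed (use xy in auto)
  show ?thesis by (rule ham_path)
qed




theorem mainTheorem8: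
  "\<exists>\<epsilon>0 > (0::real). \<exists>n0::nat. \<forall>\<epsilon> n (V :: nat set) E A B a b a' b'.
     0 < \<epsilon> \<and> \<epsilon> \<le> \<epsilon>0 \<and> n \<ge> n0 \<and>
     simple_graph V E \<and> card V = n \<and>
     superextremal_two_clique \<epsilon> V E A B \<and>
     a \<in> A \<and> b \<in> B \<and> E a b \<and> a' \<in> A \<and> b' \<in> B \<and> E a' b' \<and>
     a \<noteq> a' \<and> b \<noteq> b'
     \<longrightarrow> (\<exists>cs. hamilton_cycle V E cs \<and> cycle_contains_edge cs a b \<and> cycle_contains_edge cs a' b')"
proof (intro exI[of _ "1/100"] conjI exI[of _ "1000::nat"] allI impI)
  show "(0::real) < 1/100" by simp
  fix \<epsilon> n and V :: "nat set" and E A B a b a' b'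
  assume H: "0 < \<epsilon> \<and> \<epsilon> \<le> 1/100 \<and> n \<ge> 1000 \<and>
     simple_graph V E \<and> card V = n \<and>
     superextremal_two_clique \<epsilon> V E A B \<and>
     a \<in> A \<and> b \<in> B \<and> E a b \<and> a' \<in> A \<and> b' \<in> B \<and> E a' b' \<and>
     a \<noteq> a' \<and> b \<noteq> b'"
  have sg: "finite V" "\<And>u v. E u v \<Longrightarrow> E v u" using H unfolding simple_graph_def by auto
  have se: "A \<union> B = V" "A \<inter> B = {}" "\<bar>real (card A) - real (card B)\<bar> \<le> \<epsilon> * real n"
    "real (card {a \<in> A. real (deg_in E a A) < (1/2 - \<epsilon>) * real n}) \<le> \<epsilon> * real n"
    "\<forall>a \<in> A. real (deg_in E a A) \<ge> (1/4 - \<epsilon>) * real n"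
    "real (card {b \<in> B. real (deg_in E b B) < (1/2 - \<epsilon>) * real n}) \<le> \<epsilon> * real n"
    "\<forall>b \<in> B. real (deg_in E b B) \<ge> (1/4 - \<epsilon>) * real n"
    using H unfolding superextremal_two_clique_def Let_def by auto
  have fA: "finite A" "finite B" using sg(1) se(1) by auto
  have "card A + card B = n" using card_Un_disjoint[OF fA se(2)] se(1) H by simp
  then have cAB: "real (card A) + real (card B) = real n" by (metis of_nat_add)
  have ab: "real (card A) - real (card B) \<le> \<epsilon> * real n" "real (card B) - real (card A) \<le> \<epsilon> * real n"
    using se(3) by (auto simp: abs_le_iff)
  have cA: "real (card A) \<le> (real n + \<epsilon> * real n) / 2" using cAB ab by (simp add: field_simps)
  have cB: "real (card B) \<le> (real n + \<epsilon> * real n) / 2" using cAB ab by (simp add: field_simps)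
  obtain PA where PA: "ispath E PA" "distinct PA" "set PA = A" "hd PA = a" "last PA = a'"
    using side_path[of E A \<epsilon> n a a', OF sg(2) fA(1)] H cA se by auto
  obtain PB where PB: "ispath E PB" "distinct PB" "set PB = B" "hd PB = b'" "last PB = b"
    using side_path[of E B \<epsilon> n b' b, OF sg(2) fA(2)] H cB se by auto
  define cs where "cs = PA @ PB"
  have ne: "PA \<noteq> []" "PB \<noteq> []" using PA(3) PB(3) H by auto
  have lA: "length PA \<ge> 2"
  proof -
    have "card {a, a'} \<le> card A" using H fA by (intro card_mono) auto
    then show ?thesis using H PA(2,3) distinct_card[of PA] by simp
  qed
  have lB: "length PB \<ge> 2"
  proof -
    have "card {b, b'} \<le> card B" using H fA by (intro card_mono) auto
    then show ?thesis using H PB(2,3) distinct_card[of PB] by simp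
  qed
  have pcs: "ispath E cs" unfolding cs_def ispath_append using PA PB ne H by auto
  have lcs: "length cs = length PA + length PB" unfolding cs_def by simp
  have c0: "cs ! 0 = a" unfolding cs_def using ne PA(4) by (simp add: nth_append hd_conv_nth)
  have clast: "cs ! (length cs - 1) = b" unfolding cs_def using ne PB(5)
    by (metis last_appendR last_conv_nth append_is_Nil_conv)
  have cmid1: "cs ! (length PA - 1) = a'" unfolding cs_def using ne PA(5) lA
    by (simp add: nth_append last_conv_nth)
  have cmid2: "cs ! (length PA) = b'" unfolding cs_def using ne PB(4)
    by (simp add: nth_append hd_conv_nth)
  have "hamilton_cycle V E cs"
    unfolding hamilton_cycle_def
  proof (intro conjI allI impI)
    show "distinct cs" unfolding cs_def using PA PB se(2) by auto
    show "set cs = V" unfolding cs_def using PA PB se(1) by auto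
    show "3 \<le> length cs" using lA lB lcs by simp
    fix i assume i: "i < length cs"
    show "E (cs ! i) (cs ! ((i + 1) mod length cs))"
    proof (cases "Suc i < length cs")
      case True then show ?thesis using ispath_nth[OF pcs True] by simp
    next
      case False
      then have si: "Suc i = length cs" using i by simp
      then have "i = length cs - 1" "(i + 1) mod length cs = 0" by auto
      then show ?thesis using clast c0 sg(2) H by simp
    qed
  qed
  moreover have "cycle_contains_edge cs a b" unfolding cycle_contains_edge_def
  proof (intro exI[of _ "length cs - 1"] conjI)
    show "length cs - 1 < length cs" using lcs lA by simp
    have "length cs - 1 + 1 = length cs" using lcs lA by simp
    then have "(length cs - 1 + 1) mod length cs = 0" by simp
    then show "{cs ! (length cs - 1), cs ! ((length cs - 1 + 1) mod length cs)} = {a, b}"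
      using c0 clast by auto
  qed
  moreover have "cycle_contains_edge cs a' b'" unfolding cycle_contains_edge_def
  proof (intro exI[of _ "length PA - 1"] conjI)
    show "length PA - 1 < length cs" using lcs lA by simp
    have "(length PA - 1 + 1) mod length cs = length PA" using lcs lA lB by simp
    then show "{cs ! (length PA - 1), cs ! ((length PA - 1 + 1) mod length cs)} = {a', b'}"
      using cmid1 cmid2 by auto
  qed
  ultimately show "\<exists>cs. hamilton_cycle V E cs \<and> cycle_contains_edge cs a b \<and> cycle_contains_edge cs a' b'"
    by blast
qed


end
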